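(* Let $V$ be an irreducible Harish-Chandra $\mathcal G$-module. Suppose there exist a $\mathbb Z$-basis $\{\boldsymbol\alpha_1,\dots,\boldsymbol\alpha_n\}$ of $\mathbb Z^n$ and a nonzero weight vector $v\in V$ such that $\mathcal G_{\boldsymbol\alpha_i}v=0$ for all $i=1,\dots,n$. Then $V$ is a GHW module up to a change of coordinates: i.e., there is $k\in\mathbb N$ such that $\mathcal G_{\mathbf m}v=0$ for all $\mathbf m=\sum_{i}m_i\boldsymbol\alpha_i$ with $m_i\ge k$ for every $i$ (equivalently, after twisting $V$ by the automorphism $T_A$ with $A\boldsymbol\alpha_i$-coordinates sending $\boldsymbol\alpha_i$ to $\mathbf e_i$, $V$ is a GHW module).
   Context: $n\ge 2$. $\mathcal A_n=\mathbb C[t_1^{\pm1},\dots,t_n^{\pm1}]$, $t^{\mathbf m}=t_1^{m_1}\cdots t_n^{m_n}$, $d_j=t_j\frac{\partial}{\partial t_j}$, $(\mathbf u|\mathbf v)=\sum_iu_iv_i$, $D(\mathbf u,\mathbf r)=\sum_iu_it^{\mathbf r}d_i$. $\mathcal D_n=\mathrm{span}\{D(\mathbf u,\mathbf r):(\mathbf u|\mathbf r)=0\}$ with $[D(\mathbf p,\mathbf m),D(\mathbf q,\mathbf k)]=D((\mathbf p|\mathbf k)\mathbf q-(\mathbf q|\mathbf m)\mathbf p,\mathbf m+\mathbf k)$; $\mathcal G=\mathcal D_n\ltimes\mathcal A_n$ with $[D(\mathbf u,\mathbf r),t^{\mathbf m}]=(\mathbf u|\mathbf m)t^{\mathbf r+\mathbf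 m}$, $[t^{\mathbf r},t^{\mathbf m}]=0$. Grading: $\mathcal G_{\mathbf m}=\mathrm{span}\{D(\mathbf u,\mathbf m):(\mathbf u|\mathbf m)=0\}\oplus\mathbb Ct^{\mathbf m}$ ($\mathbf m\ne\mathbf 0$), $\mathcal G_{\mathbf 0}=\mathrm{span}\{d_j\}\oplus\mathbb Ct^{\mathbf 0}$. Harish-Chandra module: weight module for $\mathcal H=\mathrm{span}\{d_j\}$ with finite-dimensional weight spaces. GHW module: there are a nonzero weight vector $v$ and $k\in\mathbb N$ with $\mathcal G_{\mathbf m}v=0$ for all $\mathbf m\ge(k,\dots,k)$ componentwise. For $A\in GL_n(\mathbb Z)$, $T_A$ is the automorphism $D(\mathbf u,\mathbf r)\mapsto D((A^T)^{-1}\mathbf u,A\mathbf r)$, $t^{\mathbf r}\mapsto t^{A\mathbf r}$. *)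

theory Defs
  imports Complex_Main
begin

text \<open>Lattice points of Z^n are functions 'n \<Rightarrow> int, vectors in C^n are 'n \<Rightarrow> complex,
  where 'n is a finite index type with CARD('n) = n.
  A G-module structure on a complex vector space ('v, scal) is given by the action of the
  spanning elements D(u,r) (via rD u r, meaningful for (u|r)=0) and t^r (via rT r).\<close>

definition ip :: "('n::finite \<Rightarrow> complex) \<Rightarrow> ('n \<Rightarrow> int) \<Rightarrow> complex" where
  "ip u r = (\<Sum>i\<in>UNIV. u i * of_int (r i))"

definition unitv :: "'n \<Rightarrow> 'n \<Rightarrow> complex" where
  "unitv j = (\<lambda>i. if i = j then 1 else 0)"

definition G_module ::
  "(complex \<Rightarrow> 'v::ab_group_add \<Rightarrow> 'v) \<Rightarrow> (('n::finite \<Rightarrow> complex) \<Rightarrow> ('n \<Rightarrow> int) \<Rightarrow> 'v \<Rightarrow> 'v)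
    \<Rightarrow> (('n \<Rightarrow> int) \<Rightarrow> 'v \<Rightarrow> 'v) \<Rightarrow> bool" where
  "G_module scal rD rT \<longleftrightarrow>
     vector_space scal \<and>
     (\<forall>u r. ip u r = 0 \<longrightarrow> Vector_Spaces.linear scal scal (rD u r)) \<and>
     (\<forall>r. Vector_Spaces.linear scal scal (rT r)) \<and>
     (\<forall>a b u u' r w. ip u r = 0 \<longrightarrow> ip u' r = 0 \<longrightarrow>
        rD (\<lambda>i. a * u i + b * u' i) r w = scal a (rD u r w) + scal b (rD u' r w)) \<and>
     (\<forall>p m q k w. ip p m = 0 \<longrightarrow> ip q k = 0 \<longrightarrow>
        rD p m (rD q k w) - rD q k (rD p m w)
          = rD (\<lambda>i. ip p k * q i - ip q m * p i) (\<lambda>i. m i + k i) w) \<and>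
     (\<forall>u r m w. ip u r = 0 \<longrightarrow>
        rD u r (rT m w) - rT m (rD u r w) = scal (ip u m) (rT (\<lambda>i. r i + m i) w)) \<and>
     (\<forall>r m w. rT r (rT m w) = rT m (rT r w))"

definition dact :: "(('n::finite \<Rightarrow> complex) \<Rightarrow> ('n \<Rightarrow> int) \<Rightarrow> 'v \<Rightarrow> 'v) \<Rightarrow> 'n \<Rightarrow> 'v \<Rightarrow> 'v" where
  "dact rD j = rD (unitv j) (\<lambda>_. 0)"

definition weight_space ::
  "(complex \<Rightarrow> 'v::ab_group_add \<Rightarrow> 'v) \<Rightarrow> (('n::finite \<Rightarrow> complex) \<Rightarrow> ('n \<Rightarrow> int) \<Rightarrow> 'v \<Rightarrow> 'v)
    \<Rightarrow> ('n \<Rightarrow> complex) \<Rightarrow> 'v set" where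
  "weight_space scal rD lam = {w. \<forall>j. dact rD j w = scal (lam j) w}"

definition weight_vector ::
  "(complex \<Rightarrow> 'v::ab_group_add \<Rightarrow> 'v) \<Rightarrow> (('n::finite \<Rightarrow> complex) \<Rightarrow> ('n \<Rightarrow> int) \<Rightarrow> 'v \<Rightarrow> 'v)
    \<Rightarrow> 'v \<Rightarrow> bool" where
  "weight_vector scal rD w \<longleftrightarrow> (\<exists>lam. w \<in> weight_space scal rD lam)"

definition harish_chandra ::
  "(complex \<Rightarrow> 'v::ab_group_add \<Rightarrow> 'v) \<Rightarrow> (('n::finite \<Rightarrow> complex) \<Rightarrow> ('n \<Rightarrow> int) \<Rightarrow> 'v \<Rightarrow> 'v) \<Rightarrow> bool" where
  "harish_chandra scal rD \<longleftrightarrow>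
     module.span scal (\<Union>lam. weight_space scal rD lam) = UNIV \<and>
     (\<forall>lam. \<exists>B. finite B \<and> weight_space scal rD lam \<subseteq> module.span scal B)"

definition irreducible_G ::
  "(complex \<Rightarrow> 'v::ab_group_add \<Rightarrow> 'v) \<Rightarrow> (('n::finite \<Rightarrow> complex) \<Rightarrow> ('n \<Rightarrow> int) \<Rightarrow> 'v \<Rightarrow> 'v)
    \<Rightarrow> (('n \<Rightarrow> int) \<Rightarrow> 'v \<Rightarrow> 'v) \<Rightarrow> bool" where
  "irreducible_G scal rD rT \<longleftrightarrow>
     (UNIV :: 'v set) \<noteq> {0} \<and>
     (\<forall>W. module.subspace scal W \<longrightarrow>
        (\<forall>u r. ip u r = 0 \<longrightarrow> rD u r ` W \<subseteq> W) \<longrightarrow>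
        (\<forall>r. rT r ` W \<subseteq> W) \<longrightarrow> W = {0} \<or> W = UNIV)"

definition G_ann ::
  "(('n::finite \<Rightarrow> complex) \<Rightarrow> ('n \<Rightarrow> int) \<Rightarrow> 'v::zero \<Rightarrow> 'v)
    \<Rightarrow> (('n \<Rightarrow> int) \<Rightarrow> 'v \<Rightarrow> 'v) \<Rightarrow> ('n \<Rightarrow> int) \<Rightarrow> 'v \<Rightarrow> bool" where
  "G_ann rD rT m w \<longleftrightarrow> (\<forall>u. ip u m = 0 \<longrightarrow> rD u m w = 0) \<and> rT m w = 0"

definition Z_basis :: "('n::finite \<Rightarrow> ('n \<Rightarrow> int)) \<Rightarrow> bool" where
  "Z_basis \<alpha> \<longleftrightarrow> (\<forall>m. \<exists>!c. m = (\<lambda>j. \<Sum>i\<in>UNIV. c i * \<alpha> i j))"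

end

theory Submission
  imports Defs
begin

definition mc :: "('n::finite \<Rightarrow> ('n \<Rightarrow> int)) \<Rightarrow> ('n \<Rightarrow> int) \<Rightarrow> ('n \<Rightarrow> int)" where
  "mc \<alpha> c = (\<lambda>j. \<Sum>i\<in>UNIV. c i * \<alpha> i j)"

lemma ip_lin: "ip (\<lambda>i. x * u i + y * u' i) r = x * ip u r + y * ip u' r"
  by (simp add: ip_def sum.distrib sum_distrib_left algebra_simps)
lemma ip_add_right: "ip u (\<lambda>i. a i + b i) = ip u a + ip u b"
  by (simp add: ip_def sum.distrib algebra_simps)

lemma lin0: "Vector_Spaces.linear s s f \<Longrightarrow> f 0 = 0"
  by (meson Vector_Spaces.linear_def module_hom.zero)

lemma closure:
  fixes rD :: "('n::finite \<Rightarrow> complex) \<Rightarrow> ('n \<Rightarrow> int) \<Rightarrow> 'v::ab_group_add \<Rightarrow> 'v"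
  assumes GM: "G_module scal rD rT" and A: "G_ann rD rT a v" and B: "G_ann rD rT b v"
    and p0a: "ip p0 a = 0" and p0b: "ip p0 b \<noteq> 0"
  shows "G_ann rD rT (\<lambda>i. a i + b i) v"
proof -
  define p where "p = (\<lambda>i. (1 / ip p0 b) * p0 i + 0 * p0 i)"
  have pa: "ip p a = 0" unfolding p_def ip_lin using p0a by simp
  have pb: "ip p b = 1" unfolding p_def ip_lin using p0b by simp
  have VS: "vector_space scal" using GM by (simp add: G_module_def)
  have linD: "\<And>u r. ip u r = 0 \<Longrightarrow> rD u r 0 = 0" proof - fix u :: "'n \<Rightarrow> complex" and r :: "'n \<Rightarrow> int" assume "ip u r = 0" then have "Vector_Spaces.linear scal scal (rD u r)" using GM \<open>ip u r = 0\<close> by (simp add: G_module_def) then show "rD u r 0 = 0" by (rule lin0) qed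
  have linT: "\<And>r. rT r 0 = 0" proof - fix r :: "'n \<Rightarrow> int" have "Vector_Spaces.linear scal scal (rT r)" using GM by (simp add: G_module_def) then show "rT r 0 = 0" by (rule lin0) qed
  have Av: "rD p a v = 0" "rT a v = 0" using A pa by (auto simp: G_ann_def)
  have Bv: "rT b v = 0" using B by (auto simp: G_ann_def)
  have "rD p a (rT b v) - rT b (rD p a v) = scal (ip p b) (rT (\<lambda>i. a i + b i) v)"
    using GM pa by (simp add: G_module_def)
  then have T: "rT (\<lambda>i. a i + b i) v = 0"
    using Av Bv pb linD[OF pa] linT vector_space.vector_space_assms(4)[OF VS] by simp
  have D: "rD w (\<lambda>i. a i + b i) v = 0" if w: "ip w (\<lambda>i. a i + b i) = 0" for w
  proof -
    define s where "s = ip w a"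
    define q where "q = (\<lambda>i. 1 * w i + s * p i)"
    have qb: "ip q b = 0" unfolding q_def ip_lin using pb w s_def ip_add_right[of w a b] by (simp add: add.commute)
    have qa: "ip q a = s" unfolding q_def ip_lin using pa s_def by simp
    have Bq: "rD q b v = 0" using B qb by (auto simp: G_ann_def)
    have "rD p a (rD q b v) - rD q b (rD p a v) = rD (\<lambda>i. ip p b * q i - ip q a * p i) (\<lambda>i. a i + b i) v"
      using GM pa qb by (simp add: G_module_def)
    moreover have "(\<lambda>i. ip p b * q i - ip q a * p i) = w" using pb qa by (simp add: q_def)
    ultimately show ?thesis using Av Bq linD[OF pa] linD[OF qb] by simp
  qed
  show ?thesis using T D by (simp add: G_ann_def)
qed

lemma coord_ex:
  fixes \<alpha> :: "'n::finite \<Rightarrow> ('n \<Rightarrow> int)"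
  assumes Z: "Z_basis \<alpha>"
  shows "\<exists>P. \<forall>j c. ip (P j) (mc \<alpha> c) = of_int (c j)"
proof -
  define coord where "coord m = (THE c. m = mc \<alpha> c)" for m
  have ex: "\<exists>!c. m = mc \<alpha> c" for m using Z unfolding Z_basis_def mc_def by blast
  have cu: "coord (mc \<alpha> c) = c" for c
    unfolding coord_def by (rule the1_equality[OF ex]) simp
  have ce: "mc \<alpha> (coord m) = m" for m
    unfolding coord_def using theI'[OF ex[of m]] by simp
  define E where "E i = (\<lambda>j. if j = i then 1 else 0 :: int)" for i :: 'n
  define P where "P j = (\<lambda>i. of_int (coord (E i) j) :: complex)" for j
  have key: "mc \<alpha> (\<lambda>l. \<Sum>i\<in>UNIV. x i * coord (E i) l) = x" for x
  proof
    fix j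
    have "mc \<alpha> (\<lambda>l. \<Sum>i\<in>UNIV. x i * coord (E i) l) j
        = (\<Sum>l\<in>UNIV. \<Sum>i\<in>UNIV. x i * (coord (E i) l * \<alpha> l j))"
      by (simp add: mc_def sum_distrib_right mult.assoc)
    also have "\<dots> = (\<Sum>i\<in>UNIV. x i * (\<Sum>l\<in>UNIV. coord (E i) l * \<alpha> l j))"
      by (subst sum.swap) (simp add: sum_distrib_left)
    also have "\<dots> = (\<Sum>i\<in>UNIV. x i * E i j)"
      using ce by (simp add: mc_def fun_eq_iff)
    also have "\<dots> = (\<Sum>i\<in>UNIV. if j = i then x i else 0)" by (rule sum.cong) (auto simp: E_def)
    also have "\<dots> = x j" by simp
    finally show "mc \<alpha> (\<lambda>l. \<Sum>i\<in>UNIV. x i * coord (E i) l) j = x j" .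
  qed
  have cx: "coord x = (\<lambda>l. \<Sum>i\<in>UNIV. x i * coord (E i) l)" for x
    using cu[of "\<lambda>l. \<Sum>i\<in>UNIV. x i * coord (E i) l"] key[of x] by simp
  have "ip (P j) (mc \<alpha> c) = of_int (c j)" for j c
  proof -
    have "ip (P j) (mc \<alpha> c) = of_int (\<Sum>i\<in>UNIV. mc \<alpha> c i * coord (E i) j)"
      by (simp add: ip_def P_def mult.commute)
    also have "\<dots> = of_int (coord (mc \<alpha> c) j)" unfolding cx[of "mc \<alpha> c"] by simp
    finally show ?thesis using cu by simp
  qed
  then show ?thesis by blast
qed

definition ev :: "'n \<Rightarrow> 'n \<Rightarrow> int" where
  "ev x = (\<lambda>l. if l = x then 1 else 0)"

lemma mc_ev: "mc \<alpha> (ev x) = \<alpha> x"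
proof
  fix j
  have "mc \<alpha> (ev x) j = (\<Sum>i\<in>UNIV. if x = i then \<alpha> i j else 0)"
    unfolding mc_def ev_def by (rule sum.cong) auto
  then show "mc \<alpha> (ev x) j = \<alpha> x j" by simp
qed

lemma mc_add: "mc \<alpha> (\<lambda>l. c l + d l) = (\<lambda>l. mc \<alpha> d l + mc \<alpha> c l)"
  by (simp add: mc_def fun_eq_iff sum.distrib algebra_simps)

lemma closure_coord:
  fixes rD :: "('n::finite \<Rightarrow> complex) \<Rightarrow> ('n \<Rightarrow> int) \<Rightarrow> 'v::ab_group_add \<Rightarrow> 'v"
  assumes GM: "G_module scal rD rT"
    and P: "\<forall>j c. ip (P j) (mc \<alpha> c) = of_int (c j)"
    and Sc: "G_ann rD rT (mc \<alpha> c) v" and Sd: "G_ann rD rT (mc \<alpha> d) v"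
    and nd: "c i * d k \<noteq> c k * d i"
  shows "G_ann rD rT (mc \<alpha> (\<lambda>l. c l + d l)) v"
proof -
  define p0 where "p0 = (\<lambda>l. of_int (d k) * P i l + (- of_int (d i)) * P k l)"
  have a: "ip p0 (mc \<alpha> d) = 0" unfolding p0_def ip_lin using P by (simp add: mult.commute)
  have "ip p0 (mc \<alpha> c) = of_int (d k * c i - d i * c k)" unfolding p0_def ip_lin using P by simp
  moreover have "d k * c i - d i * c k \<noteq> 0" using nd by (simp add: mult.commute)
  ultimately have b: "ip p0 (mc \<alpha> c) \<noteq> 0" by (metis of_int_eq_0_iff)
  show ?thesis unfolding mc_add using closure[OF GM Sd Sc a b] .
qed

lemma ones:
  fixes rD :: "('n::finite \<Rightarrow> complex) \<Rightarrow> ('n \<Rightarrow> int) \<Rightarrow> 'v::ab_group_add \<Rightarrow> 'v"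
  assumes GM: "G_module scal rD rT"
    and P: "\<forall>j c. ip (P j) (mc \<alpha> c) = of_int (c j)"
    and A: "\<forall>i. G_ann rD rT (\<alpha> i) v"
  shows "finite T \<Longrightarrow> T \<noteq> {} \<Longrightarrow> G_ann rD rT (mc \<alpha> (\<lambda>l. if l \<in> T then 1 else 0)) v"
proof (induction T rule: finite_induct)
  case empty then show ?case by simp
next
  case (insert x F)
  show ?case
  proof (cases "F = {}")
    case True
    have "(\<lambda>l. if l \<in> insert x F then 1 else 0) = ev x" using True by (auto simp: ev_def fun_eq_iff)
    then have "mc \<alpha> (\<lambda>l. if l \<in> insert x F then 1 else 0) = \<alpha> x" using mc_ev by metis
    then show ?thesis using A by simp
  next
    case False
    then obtain k where k: "k \<in> F" by blast
    have IH: "G_ann rD rT (mc \<alpha> (\<lambda>l. if l \<in> F then 1 else 0)) v" using insert False by simp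
    have Ex: "G_ann rD rT (mc \<alpha> (ev x)) v" using A mc_ev[of \<alpha> x] by simp
    have nd: "(\<lambda>l. if l \<in> F then 1 else 0) k * ev x x \<noteq> (\<lambda>l. if l \<in> F then 1 else 0) x * ev x k"
      using k insert(2) by (auto simp: ev_def)
    have eq: "(\<lambda>l. (\<lambda>l. if l \<in> F then 1 else 0) l + ev x l) = (\<lambda>l. if l \<in> insert x F then 1 else (0::int))"
      using insert(2) by (auto simp: ev_def fun_eq_iff)
    show ?thesis using closure_coord[OF GM P IH Ex nd] unfolding eq .
  qed
qed

lemma big:
  fixes rD :: "('n::finite \<Rightarrow> complex) \<Rightarrow> ('n \<Rightarrow> int) \<Rightarrow> 'v::ab_group_add \<Rightarrow> 'v"
  assumes GM: "G_module scal rD rT"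
    and P: "\<forall>j c. ip (P j) (mc \<alpha> c) = of_int (c j)"
    and A: "\<forall>i. G_ann rD rT (\<alpha> i) v"
    and card: "card (UNIV :: 'n set) \<ge> 2"
  shows "\<forall>c. (\<forall>i. 1 \<le> c i) \<longrightarrow> (\<Sum>i\<in>UNIV. nat (c i - 1)) = N \<longrightarrow> G_ann rD rT (mc \<alpha> c) v"
proof (induction N rule: less_induct)
  case (less N)
  show ?case
  proof (intro allI impI)
    fix c :: "'n \<Rightarrow> int"
    assume c1: "\<forall>i. 1 \<le> c i" and cN: "(\<Sum>i\<in>UNIV. nat (c i - 1)) = N"
    show "G_ann rD rT (mc \<alpha> c) v"
    proof (cases "\<forall>i. c i = 1")
      case True
      then have "c = (\<lambda>l. if l \<in> UNIV then 1 else 0)" by (simp add: fun_eq_iff)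
      then show ?thesis using ones[OF GM P A, of UNIV] by simp
    next
      case False
      then obtain j where j: "c j \<noteq> 1" by blast
      with c1 have j2: "c j \<ge> 2" by (metis add.commute int_one_le_iff_zero_less le_less not_less one_add_one zless_add1_eq)
      have "\<exists>k0. k0 \<noteq> j"
      proof (rule ccontr)
        assume "\<not> (\<exists>k0. k0 \<noteq> j)"
        then have "\<forall>k. k = j" by blast
        then have "(UNIV :: 'n set) = {j}" by auto
        then have "card (UNIV :: 'n set) = card {j}" by (rule arg_cong)
        then show False using card by simp
      qed
      then obtain k0 where k0: "k0 \<noteq> j" by blast
      define c' where "c' = c(j := c j - 1)"
      have c'1: "\<forall>i. 1 \<le> c' i" using c1 j2 by (simp add: c'_def)
      have lt: "(\<Sum>i\<in>UNIV. nat (c' i - 1)) < N"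
        unfolding cN[symmetric]
        by (rule sum_strict_mono_ex1) (use j2 in \<open>auto simp: c'_def\<close>)
      have S': "G_ann rD rT (mc \<alpha> c') v" using less.IH[OF lt] c'1 by blast
      have Ex: "G_ann rD rT (mc \<alpha> (ev j)) v" using A mc_ev[of \<alpha> j] by simp
      have nd: "c' k0 * ev j j \<noteq> c' j * ev j k0" using k0 c'1 by (auto simp: ev_def) (metis not_one_le_zero)
      have eq: "(\<lambda>l. c' l + ev j l) = c" by (auto simp: c'_def ev_def fun_eq_iff)
      show ?thesis using closure_coord[OF GM P S' Ex nd] unfolding eq .
    qed
  qed
qed

theorem lemma4p2:
  fixes scal :: "complex \<Rightarrow> 'v::ab_group_add \<Rightarrow> 'v"
    and rD :: "('n::finite \<Rightarrow> complex) \<Rightarrow> ('n \<Rightarrow> int) \<Rightarrow> 'v \<Rightarrow> 'v"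
    and rT :: "('n \<Rightarrow> int) \<Rightarrow> 'v \<Rightarrow> 'v"
    and \<alpha> :: "'n \<Rightarrow> ('n \<Rightarrow> int)"
    and v :: 'v
  assumes "card (UNIV :: 'n set) \<ge> 2"
    and "G_module scal rD rT"
    and "irreducible_G scal rD rT"
    and "harish_chandra scal rD"
    and "Z_basis \<alpha>"
    and "v \<noteq> 0"
    and "weight_vector scal rD v"
    and "\<forall>i. G_ann rD rT (\<alpha> i) v"
  shows "\<exists>k::nat. \<forall>c :: 'n \<Rightarrow> int. (\<forall>i. int k \<le> c i) \<longrightarrow>
           G_ann rD rT (\<lambda>j. \<Sum>i\<in>UNIV. c i * \<alpha> i j) v"
proof -
  obtain P where P: "\<forall>j c. ip (P j) (mc \<alpha> c) = of_int (c j)"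
    using coord_ex[OF assms(5)] by blast
  have "\<forall>c :: 'n \<Rightarrow> int. (\<forall>i. int 1 \<le> c i) \<longrightarrow> G_ann rD rT (\<lambda>j. \<Sum>i\<in>UNIV. c i * \<alpha> i j) v"
  proof (intro allI impI)
    fix c :: "'n \<Rightarrow> int"
    assume "\<forall>i. int 1 \<le> c i"
    then have c1: "\<forall>i. 1 \<le> c i" by simp
    have "G_ann rD rT (mc \<alpha> c) v"
      using big[OF assms(2) P assms(8) assms(1)] c1 by blast
    then show "G_ann rD rT (\<lambda>j. \<Sum>i\<in>UNIV. c i * \<alpha> i j) v" by (simp add: mc_def)
  qed
  then show ?thesis by blast
qed

end
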